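(* Let $(X,\rho)$ be a metric space, $f\colon[0,\infty)\to[0,\infty)$ an unbounded modulus, $(A_i)\subset CL(X)$ and $A\in CL(X)$. Then $(A_i)$ is $f$-Wijsman statistically convergent to $A$ if and only if for each $x\in X$ there exists $K_x\subseteq\mathbb N$ such that $d^f(K_x)=0$ and $\lim_{i\to\infty,\ i\in\mathbb N\setminus K_x} d(x,A_i)=d(x,A)$.
   Context: A modulus is a function $f\colon[0,\infty)\to[0,\infty)$ such that $f(x)=0$ iff $x=0$, $f$ is subadditive, increasing and continuous. $CL(X)$ denotes the set of all non-empty closed subsets of $(X,\rho)$, and $d(x,B)=\inf_{y\in B}\rho(x,y)$. For an unbounded modulus $f$ and $K\subseteq\mathbb N$, the $f$-density is $d^f(K)=\lim_{n\to\infty}\frac{f(|\{k\le n:k\in K\}|)}{f(n)}$ (when the limit exists). A real sequence $(x_k)$ is $f$-statistically convergent to $l$ if for every $\varepsilon>0$ the set $\{k:|x_k-l|\ge\varepsilon\}$ has $f$-density $0$. $(A_i)$ is $f$-Wijsman statistically convergent to $A$ if for every $x\in X$ the sequence $(d(x,A_i))$ is $f$-statistically convergent to $d(x,A)$. *)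

theory Defs
  imports "HOL-Analysis.Analysis"
begin

definition modulus :: "(real \<Rightarrow> real) \<Rightarrow> bool" where
  "modulus f \<longleftrightarrow>
     (\<forall>x\<ge>0. f x \<ge> 0) \<and>
     (\<forall>x\<ge>0. f x = 0 \<longleftrightarrow> x = 0) \<and>
     (\<forall>x\<ge>0. \<forall>y\<ge>0. f (x + y) \<le> f x + f y) \<and>
     mono_on {0..} f \<and>
     continuous_on {0..} f"

definition unbounded_modulus :: "(real \<Rightarrow> real) \<Rightarrow> bool" where
  "unbounded_modulus f \<longleftrightarrow> modulus f \<and> \<not> bdd_above (f ` {0..})"

definition has_f_density :: "(real \<Rightarrow> real) \<Rightarrow> nat set \<Rightarrow> real \<Rightarrow> bool" where
  "has_f_density f K d \<longleftrightarrow>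
     ((\<lambda>n. f (real (card {k \<in> K. k \<le> n})) / f (real n)) \<longlonglongrightarrow> d)"

definition f_stat_convergent :: "(real \<Rightarrow> real) \<Rightarrow> (nat \<Rightarrow> real) \<Rightarrow> real \<Rightarrow> bool" where
  "f_stat_convergent f x l \<longleftrightarrow>
     (\<forall>\<epsilon>>0. has_f_density f {k. \<bar>x k - l\<bar> \<ge> \<epsilon>} 0)"

definition f_wijsman_stat_convergent ::
  "(real \<Rightarrow> real) \<Rightarrow> (nat \<Rightarrow> 'a::metric_space set) \<Rightarrow> 'a set \<Rightarrow> bool" where
  "f_wijsman_stat_convergent f As A \<longleftrightarrow>
     (\<forall>x. f_stat_convergent f (\<lambda>i. infdist x (As i)) (infdist x A))"

end

theory Submission
  imports Defs
begin

lemma fmod_facts: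
  assumes "unbounded_modulus f"
  shows "\<And>x. x \<ge> 0 \<Longrightarrow> f x \<ge> 0"
    and "\<And>x y. x \<ge> 0 \<Longrightarrow> y \<ge> 0 \<Longrightarrow> f (x+y) \<le> f x + f y"
    and "\<And>x y. x \<ge> 0 \<Longrightarrow> x \<le> y \<Longrightarrow> f x \<le> f y"
    and "filterlim (\<lambda>n::nat. f (real n)) at_top sequentially"
proof -
  have m: "modulus f" and ub: "\<not> bdd_above (f ` {0..})"
    using assms unfolding unbounded_modulus_def by auto
  show "\<And>x. x \<ge> 0 \<Longrightarrow> f x \<ge> 0" using m unfolding modulus_def by auto
  show "\<And>x y. x \<ge> 0 \<Longrightarrow> y \<ge> 0 \<Longrightarrow> f (x+y) \<le> f x + f y" using m unfolding modulus_def by auto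
  have mo: "mono_on {0..} f" using m unfolding modulus_def by auto
  show mono: "\<And>x y. x \<ge> 0 \<Longrightarrow> x \<le> y \<Longrightarrow> f x \<le> f y"
    using mo by (auto intro: mono_onD)
  show "filterlim (\<lambda>n::nat. f (real n)) at_top sequentially"
    unfolding filterlim_at_top
  proof (intro allI)
    fix B
    from ub have "\<exists>y\<ge>0. f y > B" unfolding bdd_above_def by (auto simp: not_le)
    then obtain y where y: "y \<ge> 0" "f y > B" by blast
    obtain n0 :: nat where "real n0 \<ge> y" using real_arch_simple by blast
    show "eventually (\<lambda>n. B \<le> f (real n)) sequentially"
      unfolding eventually_sequentially
    proof (intro exI allI impI)
      fix n assume "n0 \<le> n"
      then have "y \<le> real n" using \<open>real n0 \<ge> y\<close> by linarith
      then show "B \<le> f (real n)" using mono[OF y(1)] y(2) by fastforce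
    qed
  qed
qed

lemma density0_sub:
  assumes f: "unbounded_modulus f" and K: "has_f_density f K 0" and E: "E \<subseteq> K \<union> {..<N}"
  shows "has_f_density f E 0"
proof -
  note ff = fmod_facts[OF f]
  have ub: "f (real (card {k\<in>E. k\<le>n})) / f (real n)
      \<le> f (real (card {k\<in>K. k\<le>n})) / f (real n) + f (real N) / f (real n)" for n
  proof -
    have "{k\<in>E. k\<le>n} \<subseteq> {k\<in>K. k\<le>n} \<union> {..<N}" using E by auto
    then have "card {k\<in>E. k\<le>n} \<le> card ({k\<in>K. k\<le>n} \<union> {..<N})"
      by (intro card_mono) auto
    also have "\<dots> \<le> card {k\<in>K. k\<le>n} + N"
      using card_Un_le[of "{k\<in>K. k\<le>n}" "{..<N}"] by simp
    finally have "real (card {k\<in>E. k\<le>n}) \<le> real (card {k\<in>K. k\<le>n}) + real N" by linarith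
    then have "f (real (card {k\<in>E. k\<le>n})) \<le> f (real (card {k\<in>K. k\<le>n}) + real N)"
      by (intro ff(3)) auto
    also have "\<dots> \<le> f (real (card {k\<in>K. k\<le>n})) + f (real N)" by (intro ff(2)) auto
    finally show ?thesis using ff(1)[of "real n"]
      by (simp add: divide_right_mono add_divide_distrib[symmetric])
  qed
  have lim2: "(\<lambda>n. f (real (card {k\<in>K. k\<le>n})) / f (real n) + f (real N) / f (real n)) \<longlonglongrightarrow> 0"
  proof -
    have "(\<lambda>n. f (real N) / f (real n)) \<longlonglongrightarrow> 0"
      by (rule tendsto_divide_0[OF tendsto_const filterlim_at_top_imp_at_infinity[OF ff(4)]])
    then show ?thesis using K unfolding has_f_density_def using tendsto_add by fastforce
  qed
  show ?thesis unfolding has_f_density_def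
    by (rule tendsto_sandwich[OF _ _ tendsto_const lim2])
       (auto intro!: always_eventually divide_nonneg_nonneg ff(1) ub)
qed

lemma key:
  fixes x :: "nat \<Rightarrow> real"
  assumes f: "unbounded_modulus f"
  shows "f_stat_convergent f x l \<longleftrightarrow>
    (\<exists>K. has_f_density f K 0 \<and> (x \<longlongrightarrow> l) (inf sequentially (principal (UNIV - K))))"
proof
  note ff = fmod_facts[OF f]
  assume "\<exists>K. has_f_density f K 0 \<and> (x \<longlongrightarrow> l) (inf sequentially (principal (UNIV - K)))"
  then obtain K where K: "has_f_density f K 0" and T: "(x \<longlongrightarrow> l) (inf sequentially (principal (UNIV - K)))"
    by blast
  show "f_stat_convergent f x l" unfolding f_stat_convergent_def
  proof (intro allI impI)
    fix e :: real assume "e > 0"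
    then have "eventually (\<lambda>i. dist (x i) l < e) (inf sequentially (principal (UNIV - K)))"
      using T tendsto_iff by blast
    then obtain N where N: "\<forall>i\<ge>N. i \<in> UNIV - K \<longrightarrow> dist (x i) l < e"
      unfolding eventually_inf_principal eventually_sequentially by blast
    have "{k. e \<le> \<bar>x k - l\<bar>} \<subseteq> K \<union> {..<N}"
    proof
      fix k assume "k \<in> {k. e \<le> \<bar>x k - l\<bar>}"
      then have "e \<le> dist (x k) l" by (simp add: dist_real_def)
      then have "\<not> (N \<le> k \<and> k \<notin> K)" using N by force
      then show "k \<in> K \<union> {..<N}" by auto
    qed
    then show "has_f_density f {k. e \<le> \<bar>x k - l\<bar>} 0" by (rule density0_sub[OF f K])
  qed
next
  note ff = fmod_facts[OF f]
  assume H: "f_stat_convergent f x l"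
  define S where "S j = {k. 1/real(Suc j) \<le> \<bar>x k - l\<bar>}" for j
  define r where "r E n = f (real (card {k\<in>E. k\<le>n})) / f (real n)" for E n
  have rnn: "r E n \<ge> 0" for E n unfolding r_def by (intro divide_nonneg_nonneg ff(1)) auto
  have Sd: "(\<lambda>n. r (S j) n) \<longlonglongrightarrow> 0" for j
    using H unfolding f_stat_convergent_def has_f_density_def S_def r_def by simp
  have Smono: "S i \<subseteq> S j" if "i \<le> j" for i j
  proof
    fix k assume "k \<in> S i"
    moreover have "1/real(Suc j) \<le> 1/real(Suc i)" using that by (simp add: frac_le)
    ultimately show "k \<in> S j" unfolding S_def by auto
  qed
  have "\<forall>j. \<exists>M. \<forall>n\<ge>M. r (S j) n < 1/real(Suc j)"
  proof
    fix j
    from LIMSEQ_D[OF Sd[of j], of "1/real(Suc j)"] obtain M where "\<forall>n\<ge>M. norm (r (S j) n - 0) < 1/real(Suc j)"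
      by auto
    then show "\<exists>M. \<forall>n\<ge>M. r (S j) n < 1/real(Suc j)" by (metis abs_less_iff diff_zero real_norm_def)
  qed
  then obtain M where M: "\<And>j n. n \<ge> M j \<Longrightarrow> r (S j) n < 1/real(Suc j)" by metis
  define N where "N j = (\<Sum>i\<le>j. M i) + j" for j
  have NSuc: "N (Suc j) = N j + M (Suc j) + 1" for j unfolding N_def by simp
  have Nsm: "strict_mono N" by (rule strict_monoI_Suc) (simp add: NSuc)
  have NM: "M j \<le> N j" for j unfolding N_def
    using member_le_sum[of j "{..j}" M] by auto
  have Nj: "j \<le> N j" for j unfolding N_def by simp
  define K where "K = {k. \<exists>j. N j \<le> k \<and> k \<in> S j}"
  have dK: "has_f_density f K 0" unfolding has_f_density_def
  proof (rule LIMSEQ_I)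
    fix e :: real assume "e > 0"
    then obtain j0 where j0: "inverse (real (Suc j0)) < e" using reals_Archimedean by blast
    show "\<exists>no. \<forall>n\<ge>no. norm (f (real (card {k \<in> K. k \<le> n})) / f (real n) - 0) < e"
    proof (intro exI allI impI)
      fix n assume n: "N j0 \<le> n"
      define J where "J = {j. N j \<le> n}"
      have fin: "finite J" unfolding J_def
        by (rule finite_subset[of _ "{..n}"]) (auto intro: order_trans[OF Nj])
      have j0J: "j0 \<in> J" using n unfolding J_def by simp
      define j where "j = Max J"
      have jJ: "j \<in> J" unfolding j_def using fin j0J Max_in by blast
      have jge: "j0 \<le> j" unfolding j_def using fin j0J by simp
      have sub: "{k\<in>K. k\<le>n} \<subseteq> {k\<in>S j. k\<le>n}"
      proof
        fix k assume "k \<in> {k\<in>K. k\<le>n}"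
        then obtain i where i: "N i \<le> k" "k \<in> S i" "k \<le> n" unfolding K_def by auto
        then have "i \<in> J" unfolding J_def by simp
        then have "i \<le> j" unfolding j_def using fin by simp
        then show "k \<in> {k\<in>S j. k\<le>n}" using i Smono by auto
      qed
      have "card {k\<in>K. k\<le>n} \<le> card {k\<in>S j. k\<le>n}" by (rule card_mono[OF _ sub]) auto
      then have "f (real (card {k\<in>K. k\<le>n})) \<le> f (real (card {k\<in>S j. k\<le>n}))"
        by (intro ff(3)) auto
      then have "r K n \<le> r (S j) n" unfolding r_def
        using ff(1)[of "real n"] by (simp add: divide_right_mono)
      also have "\<dots> < 1/real(Suc j)"
        using M[of j n] NM[of j] jJ unfolding J_def by simp
      also have "\<dots> \<le> 1/real(Suc j0)" using jge by (simp add: frac_le)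
      also have "\<dots> < e" using j0 by (simp add: inverse_eq_divide)
      finally show "norm (f (real (card {k \<in> K. k \<le> n})) / f (real n) - 0) < e"
        using rnn[of K n] unfolding r_def by simp
    qed
  qed
  have "(x \<longlongrightarrow> l) (inf sequentially (principal (UNIV - K)))"
    unfolding tendsto_iff
  proof (intro allI impI)
    fix e :: real assume "e > 0"
    then obtain j where j: "inverse (real (Suc j)) < e" using reals_Archimedean by blast
    show "eventually (\<lambda>i. dist (x i) l < e) (inf sequentially (principal (UNIV - K)))"
      unfolding eventually_inf_principal eventually_sequentially
    proof (intro exI allI impI)
      fix i assume "N j \<le> i" "i \<in> UNIV - K"
      then have "i \<notin> S j" unfolding K_def by auto
      then have "\<bar>x i - l\<bar> < 1/real(Suc j)" unfolding S_def by auto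
      then show "dist (x i) l < e" using j by (simp add: dist_real_def inverse_eq_divide)
    qed
  qed
  then show "\<exists>K. has_f_density f K 0 \<and> (x \<longlongrightarrow> l) (inf sequentially (principal (UNIV - K)))"
    using dK by blast
qed

theorem theorem2p10:
  fixes f :: "real \<Rightarrow> real"
    and As :: "nat \<Rightarrow> 'a::metric_space set"
    and A :: "'a set"
  assumes "unbounded_modulus f"
    and "\<And>i. closed (As i) \<and> As i \<noteq> {}"
    and "closed A" and "A \<noteq> {}"
  shows "f_wijsman_stat_convergent f As A \<longleftrightarrow>
    (\<forall>x. \<exists>K. has_f_density f K 0 \<and>
        ((\<lambda>i. infdist x (As i)) \<longlongrightarrow> infdist x A)
          (inf sequentially (principal (UNIV - K))))"
  unfolding f_wijsman_stat_convergent_def using key[OF assms(1)] by blast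

end
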